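(* $\Delta[\Delta,\Delta]\Delta+\mathbb F1=\langle A,B\rangle\cap\langle B,C\rangle\cap\langle A,C\rangle$.
   Context: Let $\mathbb F$ be a field and fix a nonzero $q\in\mathbb F$ with $q^4\neq 1$. The universal Askey--Wilson algebra $\Delta$ is the associative $\mathbb F$-algebra with 1 with generators $A,B,C$ subject to the relations that each of $A+\frac{qBC-q^{-1}CB}{q^2-q^{-2}}$, $B+\frac{qCA-q^{-1}AC}{q^2-q^{-2}}$, $C+\frac{qAB-q^{-1}BA}{q^2-q^{-2}}$ is central. $[\Delta,\Delta]={\rm Span}\{uv-vu:u,v\in\Delta\}$, so $\Delta[\Delta,\Delta]\Delta$ is the 2-sided ideal generated by it. For $\mathcal S\subseteq\Delta$, $\langle\mathcal S\rangle$ denotes the $\mathbb F$-subalgebra of $\Delta$ generated by $\mathcal S$. *)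

theory Defs
  imports Main "HOL-Library.Poly_Mapping"
begin

datatype gen = GA | GB | GC

datatype word = W "gen list"

instantiation word :: monoid_add
begin
fun plus_word :: "word \<Rightarrow> word \<Rightarrow> word" where
  "plus_word (W xs) (W ys) = W (xs @ ys)"
definition zero_word :: word where "zero_word = W []"
instance
proof
  fix a b c :: word
  show "a + b + c = a + (b + c)" by (cases a; cases b; cases c) simp
  show "0 + a = a" by (cases a) (simp add: zero_word_def)
  show "a + 0 = a" by (cases a) (simp add: zero_word_def)
qed
end

text \<open>The free associative unital \<open>'k\<close>-algebra \<open>\<FF>\<langle>A,B,C\<rangle>\<close>: finitely supported
  functions from words to \<open>'k\<close>, with convolution product.\<close>
type_synonym 'k freealg = "word \<Rightarrow>\<^sub>0 'k"

definition sc :: "'k::field \<Rightarrow> 'k freealg" where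
  "sc c = Poly_Mapping.single 0 c"

definition genA :: "'k::field freealg" where "genA = Poly_Mapping.single (W [GA]) 1"
definition genB :: "'k::field freealg" where "genB = Poly_Mapping.single (W [GB]) 1"
definition genC :: "'k::field freealg" where "genC = Poly_Mapping.single (W [GC]) 1"

text \<open>Two-sided ideal generated by \<open>S\<close> (in a unital algebra this is also the
  algebra ideal, since scalars are elements of the ring).\<close>
inductive_set ideal_gen :: "'a::ring_1 set \<Rightarrow> 'a set" for S where
  base: "x \<in> S \<Longrightarrow> x \<in> ideal_gen S"
| zero: "0 \<in> ideal_gen S"
| add: "x \<in> ideal_gen S \<Longrightarrow> y \<in> ideal_gen S \<Longrightarrow> x + y \<in> ideal_gen S"
| lmult: "x \<in> ideal_gen S \<Longrightarrow> r * x \<in> ideal_gen S"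
| rmult: "x \<in> ideal_gen S \<Longrightarrow> x * r \<in> ideal_gen S"

inductive_set subalg_gen :: "'k::field freealg set \<Rightarrow> 'k freealg set" for S where
  base: "x \<in> S \<Longrightarrow> x \<in> subalg_gen S"
| scal: "sc c \<in> subalg_gen S"
| add: "x \<in> subalg_gen S \<Longrightarrow> y \<in> subalg_gen S \<Longrightarrow> x + y \<in> subalg_gen S"
| mult: "x \<in> subalg_gen S \<Longrightarrow> y \<in> subalg_gen S \<Longrightarrow> x * y \<in> subalg_gen S"

definition awA :: "'k::field \<Rightarrow> 'k freealg" where
  "awA q = genA + sc (q / (q^2 - inverse (q^2))) * genB * genC
                - sc (inverse q / (q^2 - inverse (q^2))) * genC * genB"
definition awB :: "'k::field \<Rightarrow> 'k freealg" where
  "awB q = genB + sc (q / (q^2 - inverse (q^2))) * genC * genA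
                - sc (inverse q / (q^2 - inverse (q^2))) * genA * genC"
definition awC :: "'k::field \<Rightarrow> 'k freealg" where
  "awC q = genC + sc (q / (q^2 - inverse (q^2))) * genA * genB
                - sc (inverse q / (q^2 - inverse (q^2))) * genB * genA"

text \<open>Defining ideal of \<open>\<Delta>\<close>: it is generated by all \<open>\<alpha> x - x \<alpha>\<close>, where \<open>\<alpha>\<close> is one of the three
  elements required to be central and \<open>x\<close> ranges over the free algebra.
  Then \<open>\<Delta> = freealg / AW_ideal q\<close>.\<close>
definition AW_ideal :: "'k::field \<Rightarrow> 'k freealg set" where
  "AW_ideal q = ideal_gen {a * x - x * a | a x. a \<in> {awA q, awB q, awC q}}"

text \<open>Preimage in the free algebra, under the quotient map \<open>\<pi>\<close>, of the image \<open>\<pi>(X)\<close>: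
  i.e. \<open>X + AW_ideal q\<close>.  Subsets of \<open>\<Delta>\<close> are represented by their (full) preimages
  in the free algebra; two subsets of \<open>\<Delta>\<close> are equal iff their preimages are.\<close>
definition lift :: "'k::field \<Rightarrow> 'k freealg set \<Rightarrow> 'k freealg set" where
  "lift q X = {x + i | x i. x \<in> X \<and> i \<in> AW_ideal q}"

text \<open>Preimage of \<open>\<Delta>[\<Delta>,\<Delta>]\<Delta> + \<FF>1\<close>: since \<open>\<pi>\<close> is surjective, \<open>\<Delta>[\<Delta>,\<Delta>]\<Delta>\<close> is the image
  of the two-sided ideal of the free algebra generated by all commutators.\<close>
definition comm_ideal_plus_scalars :: "'k::field \<Rightarrow> 'k freealg set" where
  "comm_ideal_plus_scalars q =
     lift q {j + sc c | j c. j \<in> ideal_gen {u * v - v * u | u v :: 'k freealg. True}}"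

end

theory Submission
  imports Defs "HOL-Library.Multiset"
begin

lemma pm_induct[case_names zero single add]:
  fixes x :: "'a \<Rightarrow>\<^sub>0 'b::comm_monoid_add"
  assumes "P 0" "\<And>w c. P (Poly_Mapping.single w c)" "\<And>x y. P x \<Longrightarrow> P y \<Longrightarrow> P (x + y)"
  shows "P x"
proof (induct x rule: update_induct)
  case const then show ?case using assms by simp
next
  case (update f a b)
  have "Poly_Mapping.update a b f = f + Poly_Mapping.single a b"
    using update(1)
    by (intro poly_mapping_eqI) (auto simp: lookup_update lookup_add lookup_single in_keys_iff when_def)
  then show ?case using update assms by simp
qed

lemma sc_comm: "sc c * (x::'k::field freealg) = x * sc c"
  unfolding sc_def
  by (induct x rule: pm_induct) (simp_all add: mult_single distrib_left distrib_right mult.commute)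

lemma sc_mult: "sc c * sc d = (sc (c*d) :: 'k::field freealg)"
  unfolding sc_def by (simp add: mult_single)

lemma sc_one: "sc 1 = (1::'k::field freealg)"
  unfolding sc_def by simp

lemma sc_minus_one: "sc (-1) = (-1::'k::field freealg)"
  unfolding sc_def by (simp add: single_uminus)

lemma sc_diff: "sc (c - d) = (sc c - sc d::'k::field freealg)"
  unfolding sc_def by (simp add: single_diff)

lemma sc_assoc: "x * (sc c * y) = sc c * (x * (y::'k::field freealg))"
  by (metis mult.assoc sc_comm)

lemma sc_sc: "sc c * (sc d * y) = sc (c*d) * (y::'k::field freealg)"
  by (metis mult.assoc sc_mult)

definition wd :: "gen list \<Rightarrow> 'k::field freealg" where
  "wd l = Poly_Mapping.single (W l) 1"

definition gn :: "gen \<Rightarrow> 'k::field freealg" where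
  "gn g = (case g of GA \<Rightarrow> genA | GB \<Rightarrow> genB | GC \<Rightarrow> genC)"

lemma gn_wd: "gn g = wd [g]"
  by (cases g) (simp_all add: gn_def wd_def genA_def genB_def genC_def)

lemma wd_Cons: "wd (g # l) = wd [g] * (wd l :: 'k::field freealg)"
  unfolding wd_def by (simp add: mult_single)

lemma wd_Nil: "wd [] = (1::'k::field freealg)"
  unfolding wd_def by (simp add: zero_word_def[symmetric])

lemma single_wd: "Poly_Mapping.single (W l) c = sc c * (wd l :: 'k::field freealg)"
  unfolding wd_def sc_def by (simp add: mult_single)

lemma subalg_sub: "x \<in> subalg_gen S \<Longrightarrow> y \<in> subalg_gen S \<Longrightarrow> x - y \<in> subalg_gen S"
proof -
  assume a: "x \<in> subalg_gen S" "y \<in> subalg_gen S"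
  have "sc (-1) * y \<in> subalg_gen S" using a by (intro subalg_gen.mult subalg_gen.scal)
  then have "x + sc (-1) * y \<in> subalg_gen S" using a by (intro subalg_gen.add)
  then show ?thesis by (simp add: sc_minus_one)
qed

lemma subalg_mono: "x \<in> subalg_gen S \<Longrightarrow> S \<subseteq> T \<Longrightarrow> x \<in> subalg_gen T"
  by (induct x rule: subalg_gen.induct) (auto intro: subalg_gen.intros)

lemma all_gen: "(x::'k::field freealg) \<in> subalg_gen {genA, genB, genC}"
proof -
  have w: "wd l \<in> subalg_gen {genA, genB, genC}" for l :: "gen list"
  proof (induct l)
    case Nil then show ?case using subalg_gen.scal[of 1] by (simp add: sc_one wd_Nil)
  next
    case (Cons g l)
    have "wd [g] \<in> subalg_gen {genA, genB, genC}"
      by (cases g) (auto simp: gn_wd[symmetric] gn_def intro: subalg_gen.base)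
    then show ?case using Cons by (subst wd_Cons) (rule subalg_gen.mult)
  qed
  show ?thesis
  proof (induct x rule: pm_induct)
    case zero
    have "sc 0 \<in> subalg_gen {genA, genB, genC :: 'k freealg}" by (rule subalg_gen.scal)
    then show ?case by (simp add: sc_def)
  next
    case (single w c)
    obtain l where "w = W l" by (cases w)
    then show ?case by (simp add: single_wd) (intro subalg_gen.mult subalg_gen.scal w)
  next
    case (add x y) then show ?case by (rule subalg_gen.add)
  qed
qed



definition smul :: "'k::field \<Rightarrow> 'k freealg \<Rightarrow> 'k freealg" where
  "smul c x = sc c * x"

lemma smul_simps:
  "smul c (x + y) = smul c x + smul c y"
  "smul c (x - y) = smul c x - smul c y"
  "smul c (- x) = - smul c x"
  "x * smul c y = smul c (x * y)"
  "smul c x * y = smul c (x * y)"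
  "smul c (smul d x) = smul (c * d) x"
  unfolding smul_def
     apply (simp add: distrib_left)
    apply (simp add: right_diff_distrib)
   apply simp
  apply (rule sc_assoc)
  apply (simp add: mult.assoc)
  apply (rule sc_sc)
  done


lemma smul_sc: "smul c x = sc c * x" by (simp add: smul_def)

lemma smul_diff_scal: "smul a x - smul b x = smul (a - b) x"
  by (simp add: smul_def sc_diff left_diff_distrib)

lemma smul_inv: "c \<noteq> 0 \<Longrightarrow> smul (1/c) (smul c x) = x"
  by (simp add: smul_def mult.assoc[symmetric] sc_mult sc_one)

inductive_set cid :: "'a::ring_1 set \<Rightarrow> 'a \<Rightarrow> 'a set" for S c where
  cbase: "c \<in> cid S c"
| czero: "0 \<in> cid S c"
| cadd: "x \<in> cid S c \<Longrightarrow> y \<in> cid S c \<Longrightarrow> x + y \<in> cid S c"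
| clm: "s \<in> S \<Longrightarrow> x \<in> cid S c \<Longrightarrow> s * x \<in> cid S c"
| crm: "s \<in> S \<Longrightarrow> x \<in> cid S c \<Longrightarrow> x * s \<in> cid S c"

lemma ideal_neg: "x \<in> ideal_gen S \<Longrightarrow> - x \<in> ideal_gen S"
  using ideal_gen.lmult[of x S "-1"] by simp

lemma ideal_diff: "x \<in> ideal_gen S \<Longrightarrow> y \<in> ideal_gen S \<Longrightarrow> x - y \<in> ideal_gen S"
  using ideal_gen.add[OF _ ideal_neg] by (metis diff_conv_add_uminus)

context
  fixes X Y Z G H :: "'k::field freealg" and a b :: 'k and T :: "'k freealg set"
  assumes G_eq: "G = Z + smul a (X * Y) - smul b (Y * X)"
    and H_eq: "H = X + smul a (Y * Z) - smul b (Z * Y)"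
    and ab: "a \<noteq> b"
    and Gc: "\<And>x. G * x - x * G \<in> ideal_gen T"
    and Hc: "\<And>x. H * x - x * H \<in> ideal_gen T"
    and gen: "\<And>x. x \<in> subalg_gen {X, Y, Z}"
begin

abbreviation "SS \<equiv> subalg_gen {X, Y}"
abbreviation "II \<equiv> ideal_gen T"
abbreviation "MM \<equiv> cid SS (X * Y - Y * X)"
abbreviation "EE \<equiv> smul a (X * Y) - smul b (Y * X)"
definition "KK = {x. \<exists>m\<in>MM. x - m \<in> II}"

lemma X_S: "X \<in> SS" and Y_S: "Y \<in> SS" by (auto intro: subalg_gen.base)

lemma smul_S: "s \<in> SS \<Longrightarrow> smul c s \<in> SS"
  unfolding smul_def by (intro subalg_gen.mult subalg_gen.scal)

lemma E_S: "EE \<in> SS"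
  by (intro subalg_sub smul_S subalg_gen.mult X_S Y_S)

lemma M_S: "m \<in> MM \<Longrightarrow> m \<in> SS"
proof (induct m rule: cid.induct)
  case cbase then show ?case by (intro subalg_sub subalg_gen.mult X_S Y_S)
next
  case czero
  have "sc 0 \<in> SS" by (rule subalg_gen.scal)
  then show ?case by (simp add: sc_def)
qed (auto intro: subalg_gen.add subalg_gen.mult)

lemma M_neg: "m \<in> MM \<Longrightarrow> - m \<in> MM"
  using clm[OF subalg_gen.scal[of "-1"], of m] by (simp add: sc_minus_one)

lemma M_comm1: assumes "t \<in> SS" "g \<in> {X, Y}" shows "g * t - t * g \<in> MM"
  using assms proof (induct t rule: subalg_gen.induct)
  case (base x)
  then show ?case
  proof (elim insertE)
    assume "g = X" "x = X" then show ?thesis by (simp add: czero)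
  next
    assume "g = Y" "x = Y" then show ?thesis by (simp add: czero)
  next
    assume "g = X" "x = Y" then show ?thesis by (simp add: cbase)
  next
    assume "g = Y" "x = X" then show ?thesis using M_neg[OF cbase] by simp
  qed auto
next
  case (scal c) then show ?case by (simp add: sc_comm czero)
next
  case (add x y)
  have "g * (x + y) - (x + y) * g = (g * x - x * g) + (g * y - y * g)" by (simp add: algebra_simps)
  then show ?case using add by (simp add: cadd)
next
  case (mult x y)
  have "g * (x * y) - (x * y) * g = (g * x - x * g) * y + x * (g * y - y * g)" by (simp add: algebra_simps)
  then show ?case using mult by (simp add: cadd clm crm)
qed

lemma M_comm: assumes "s \<in> SS" "t \<in> SS" shows "s * t - t * s \<in> MM"
  using assms proof (induct s rule: subalg_gen.induct)
  case (base x) then show ?case by (intro M_comm1)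
next
  case (scal c) then show ?case by (simp add: sc_comm czero)
next
  case (add x y)
  have "(x + y) * t - t * (x + y) = (x * t - t * x) + (y * t - t * y)" by (simp add: algebra_simps)
  then show ?case using add by (simp add: cadd)
next
  case (mult x y)
  have "(x * y) * t - t * (x * y) = x * (y * t - t * y) + (x * t - t * x) * y" by (simp add: algebra_simps)
  then show ?case using mult by (simp add: cadd clm crm)
qed

lemma K_intro: "m \<in> MM \<Longrightarrow> x - m \<in> II \<Longrightarrow> x \<in> KK"
  unfolding KK_def by blast

lemma K_elim: "x \<in> KK \<Longrightarrow> \<exists>m. m \<in> MM \<and> x - m \<in> II"
  unfolding KK_def by blast

lemma K_I: "i \<in> II \<Longrightarrow> i \<in> KK"
  by (rule K_intro[OF czero]) simp

lemma K_M: "m \<in> MM \<Longrightarrow> m \<in> KK"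
  by (rule K_intro[of m]) (simp_all add: ideal_gen.zero)

lemma K_add: "x \<in> KK \<Longrightarrow> y \<in> KK \<Longrightarrow> x + y \<in> KK"
proof -
  assume "x \<in> KK" "y \<in> KK"
  then obtain m1 m2 where m: "m1 \<in> MM" "m2 \<in> MM" "x - m1 \<in> II" "y - m2 \<in> II" by (blast dest: K_elim)
  have eq: "(x + y) - (m1 + m2) = (x - m1) + (y - m2)" by (simp add: algebra_simps)
  have "(x + y) - (m1 + m2) \<in> II" unfolding eq using m by (intro ideal_gen.add)
  then show ?thesis by (rule K_intro[OF cadd[OF m(1,2)]])
qed

lemma K_neg: "x \<in> KK \<Longrightarrow> - x \<in> KK"
proof -
  assume "x \<in> KK"
  then obtain m where m: "m \<in> MM" "x - m \<in> II" by (blast dest: K_elim)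
  have eq: "- x - (- m) = - (x - m)" by simp
  have "- x - (- m) \<in> II" unfolding eq using m by (intro ideal_neg)
  then show ?thesis by (rule K_intro[OF M_neg[OF m(1)]])
qed

lemma K_diff: "x \<in> KK \<Longrightarrow> y \<in> KK \<Longrightarrow> x - y \<in> KK"
  using K_add[OF _ K_neg, of x y] by (simp only: diff_conv_add_uminus)

lemma K_lS: "s \<in> SS \<Longrightarrow> x \<in> KK \<Longrightarrow> s * x \<in> KK"
proof -
  assume s: "s \<in> SS" and "x \<in> KK"
  then obtain m where m: "m \<in> MM" "x - m \<in> II" by (blast dest: K_elim)
  have eq: "s * x - s * m = s * (x - m)" by (simp add: algebra_simps)
  have "s * x - s * m \<in> II" unfolding eq using m by (intro ideal_gen.lmult)
  then show ?thesis by (rule K_intro[OF clm[OF s m(1)]])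
qed

lemma K_rS: "s \<in> SS \<Longrightarrow> x \<in> KK \<Longrightarrow> x * s \<in> KK"
proof -
  assume s: "s \<in> SS" and "x \<in> KK"
  then obtain m where m: "m \<in> MM" "x - m \<in> II" by (blast dest: K_elim)
  have eq: "x * s - m * s = (x - m) * s" by (simp add: algebra_simps)
  have "x * s - m * s \<in> II" unfolding eq using m by (intro ideal_gen.rmult)
  then show ?thesis by (rule K_intro[OF crm[OF s m(1)]])
qed

lemma K_smul: "x \<in> KK \<Longrightarrow> smul c x \<in> KK"
  unfolding smul_def by (rule K_lS[OF subalg_gen.scal])

lemma I_smul: "x \<in> II \<Longrightarrow> smul c x \<in> II"
  unfolding smul_def by (rule ideal_gen.lmult)

lemma key: "(X * Y - Y * X) * G \<in> KK"
proof -
  define D where "D = G * (Y * X - X * Y)"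
  have id: "smul a D - smul b D = (H*X - X*H) - smul a (X*(Y*EE) - (Y*EE)*X) - smul b ((EE*Y)*X - X*(EE*Y))
     + smul a ((G*Y - Y*G)*X) - smul a (G*(X*Y) - (X*Y)*G) + smul b ((G*X - X*G)*Y)"
    unfolding D_def G_eq H_eq
    by (simp add: distrib_left distrib_right left_diff_distrib right_diff_distrib mult.assoc smul_simps algebra_simps)
  have m1: "X*(Y*EE) - (Y*EE)*X \<in> MM" by (intro M_comm X_S subalg_gen.mult Y_S E_S)
  have m2: "(EE*Y)*X - X*(EE*Y) \<in> MM" by (intro M_comm X_S subalg_gen.mult Y_S E_S)
  have i1: "(G*Y - Y*G)*X \<in> II" by (intro ideal_gen.rmult Gc)
  have i3: "(G*X - X*G)*Y \<in> II" by (intro ideal_gen.rmult Gc)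
  have "smul a D - smul b D \<in> KK"
    unfolding id
    by (intro K_add K_diff K_I Hc K_smul K_M m1 m2 i1 i3 Gc)
  then have "smul (a - b) D \<in> KK" by (simp add: smul_diff_scal)
  then have "smul (1 / (a - b)) (smul (a - b) D) \<in> KK" by (rule K_smul)
  then have D: "D \<in> KK" using ab by (simp add: smul_inv)
  have eq: "(X * Y - Y * X) * G = - D - (G * (X * Y - Y * X) - (X * Y - Y * X) * G)"
    unfolding D_def by (simp add: algebra_simps)
  show ?thesis by (subst eq) (intro K_diff K_neg D K_I Gc)
qed

lemma K_MG: "m \<in> MM \<Longrightarrow> m * G \<in> KK"
proof (induct m rule: cid.induct)
  case cbase then show ?case by (rule key)
next
  case czero then show ?case by (simp add: K_I ideal_gen.zero)
next
  case (cadd x y) then show ?case by (simp add: distrib_right K_add)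
next
  case (clm s x) then show ?case by (simp add: mult.assoc K_lS)
next
  case (crm s x)
  have eq: "(x * s) * G = (x * G) * s - x * (G * s - s * G)" by (simp add: algebra_simps)
  show ?case by (subst eq) (intro K_diff K_rS crm K_I ideal_gen.lmult Gc)
qed

lemma K_rG: "x \<in> KK \<Longrightarrow> x * G \<in> KK"
proof -
  assume "x \<in> KK"
  then obtain m where m: "m \<in> MM" "x - m \<in> II" by (blast dest: K_elim)
  have eq: "x * G = m * G + (x - m) * G" by (simp add: algebra_simps)
  show ?thesis by (subst eq) (intro K_add K_MG m K_I ideal_gen.rmult)
qed

lemma K_lG: "x \<in> KK \<Longrightarrow> G * x \<in> KK"
proof -
  assume x: "x \<in> KK"
  have eq: "G * x = x * G + (G * x - x * G)" by simp
  show ?thesis by (subst eq) (intro K_add K_rG x K_I Gc)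
qed

lemma Z_eq: "Z = G - EE"
  using G_eq by (simp add: algebra_simps)

lemma K_r: "y \<in> subalg_gen {X, Y, Z} \<Longrightarrow> \<forall>x\<in>KK. x * y \<in> KK"
proof (induct y rule: subalg_gen.induct)
  case (base y)
  then show ?case
  proof (elim insertE)
    assume "y = Z"
    show ?thesis
    proof
      fix x assume x: "x \<in> KK"
      have eq: "x * y = x * G - x * EE" unfolding \<open>y = Z\<close> Z_eq by (rule right_diff_distrib)
      show "x * y \<in> KK" by (subst eq) (intro K_diff K_rG K_rS E_S x)
    qed
  qed (auto intro: K_rS X_S Y_S)
next
  case (scal c) then show ?case by (auto intro: K_rS subalg_gen.scal)
next
  case (add x y) then show ?case by (auto simp: distrib_left intro!: K_add)
next
  case (mult x y) then show ?case by (simp add: mult.assoc[symmetric])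
qed

lemma K_l: "y \<in> subalg_gen {X, Y, Z} \<Longrightarrow> \<forall>x\<in>KK. y * x \<in> KK"
proof (induct y rule: subalg_gen.induct)
  case (base y)
  then show ?case
  proof (elim insertE)
    assume "y = Z"
    show ?thesis
    proof
      fix x assume x: "x \<in> KK"
      have eq: "y * x = G * x - EE * x" unfolding \<open>y = Z\<close> Z_eq by (rule left_diff_distrib)
      show "y * x \<in> KK" by (subst eq) (intro K_diff K_lG K_lS E_S x)
    qed
  qed (auto intro: K_lS X_S Y_S)
next
  case (scal c) then show ?case by (auto intro: K_lS subalg_gen.scal)
next
  case (add x y) then show ?case by (auto simp: distrib_right intro!: K_add)
next
  case (mult x y) then show ?case by (simp add: mult.assoc)
qed

lemma K_rmult: "x \<in> KK \<Longrightarrow> x * y \<in> KK"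
  using K_r[OF gen] by blast

lemma K_lmult: "x \<in> KK \<Longrightarrow> y * x \<in> KK"
  using K_l[OF gen] by blast

lemma Zs: "s \<in> SS \<Longrightarrow> Z * s - s * Z \<in> KK"
proof -
  assume s: "s \<in> SS"
  have eq: "Z * s - s * Z = (G * s - s * G) - (EE * s - s * EE)"
    unfolding Z_eq by (simp add: algebra_simps)
  show ?thesis by (subst eq) (intro K_diff K_I Gc K_M M_comm E_S s)
qed

lemma comm1: assumes "v \<in> subalg_gen {X, Y, Z}" "g \<in> {X, Y, Z}" shows "g * v - v * g \<in> KK"
  using assms proof (induct v rule: subalg_gen.induct)
  case (base v)
  show ?case
  proof (cases "g = Z")
    case True
    show ?thesis
    proof (cases "v = Z")
      case True then show ?thesis using \<open>g = Z\<close> by (simp add: K_I ideal_gen.zero)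
    next
      case False then have "v \<in> SS" using base by (auto intro: subalg_gen.base)
      then show ?thesis using True by (simp add: Zs)
    qed
  next
    case False
    then have gS: "g \<in> SS" using base by (auto intro: subalg_gen.base)
    show ?thesis
    proof (cases "v = Z")
      case True
      have eq: "g * v - v * g = - (Z * g - g * Z)" using True by simp
      show ?thesis by (subst eq) (intro K_neg Zs gS)
    next
      case False then have "v \<in> SS" using base by (auto intro: subalg_gen.base)
      then show ?thesis using gS by (intro K_M M_comm)
    qed
  qed
next
  case (scal c) then show ?case by (simp add: sc_comm K_I ideal_gen.zero)
next
  case (add x y)
  have "g * (x + y) - (x + y) * g = (g * x - x * g) + (g * y - y * g)" by (simp add: algebra_simps)
  then show ?case using add by (simp add: K_add)
next
  case (mult x y)
  have "g * (x * y) - (x * y) * g = (g * x - x * g) * y + x * (g * y - y * g)" by (simp add: algebra_simps)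
  then show ?case using mult by (simp add: K_add K_rmult K_lmult)
qed

lemma comm_all: "u * v - v * u \<in> KK"
proof -
  have "u \<in> subalg_gen {X, Y, Z}" by (rule gen)
  then show ?thesis
  proof (induct u rule: subalg_gen.induct)
    case (base x) then show ?case by (intro comm1 gen)
  next
    case (scal c) then show ?case by (simp add: sc_comm K_I ideal_gen.zero)
  next
    case (add x y)
    have "(x + y) * v - v * (x + y) = (x * v - v * x) + (y * v - v * y)" by (simp add: algebra_simps)
    then show ?case using add by (simp add: K_add)
  next
    case (mult x y)
    have "(x * y) * v - v * (x * y) = x * (y * v - v * y) + (x * v - v * x) * y" by (simp add: algebra_simps)
    then show ?case using mult by (simp add: K_add K_rmult K_lmult)
  qed
qed

lemma main_dir: "j \<in> ideal_gen {u * v - v * u | u v :: 'k freealg. True} \<Longrightarrow> \<exists>s i. j = s + i \<and> s \<in> SS \<and> i \<in> II"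
proof -
  assume "j \<in> ideal_gen {u * v - v * u | u v :: 'k freealg. True}"
  then have "j \<in> KK"
    by (induct j rule: ideal_gen.induct) (auto intro: comm_all K_I ideal_gen.zero K_add K_rmult K_lmult)
  then obtain m where m: "m \<in> MM" "j - m \<in> II" by (blast dest: K_elim)
  then show ?thesis by (intro exI[of _ m] exI[of _ "j - m"]) (simp add: M_S)
qed

end



fun rk :: "gen \<Rightarrow> nat" where
  "rk GA = 0" | "rk GB = 1" | "rk GC = 2"

instantiation gen :: linorder
begin
definition less_eq_gen :: "gen \<Rightarrow> gen \<Rightarrow> bool" where "less_eq_gen x y = (rk x \<le> rk y)"
definition less_gen :: "gen \<Rightarrow> gen \<Rightarrow> bool" where "less_gen x y = (rk x < rk y)"
instance
proof
  fix x y z :: gen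
  show "(x < y) = (x \<le> y \<and> \<not> y \<le> x)" by (auto simp: less_eq_gen_def less_gen_def)
  show "x \<le> x" by (simp add: less_eq_gen_def)
  show "x \<le> y \<Longrightarrow> y \<le> z \<Longrightarrow> x \<le> z" by (simp add: less_eq_gen_def)
  show "x \<le> y \<Longrightarrow> y \<le> x \<Longrightarrow> x = y" by (cases x; cases y; simp add: less_eq_gen_def)
  show "x \<le> y \<or> y \<le> x" by (auto simp: less_eq_gen_def)
qed
end

fun wl :: "word \<Rightarrow> gen list" where "wl (W l) = l"

definition PL :: "gen multiset \<Rightarrow> gen list set" where "PL m = {l. mset l = m}"

lemma finite_PL: "finite (PL m)"
proof -
  have "PL m \<subseteq> {l. set l \<subseteq> set_mset m \<and> length l = size m}"
    unfolding PL_def by auto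
  then show ?thesis using finite_lists_length_eq[OF finite_set_mset] by (rule finite_subset)
qed

definition phi :: "'k::field freealg \<Rightarrow> (gen multiset \<Rightarrow>\<^sub>0 'k)" where
  "phi x = Abs_poly_mapping (\<lambda>m. \<Sum>l\<in>PL m. Poly_Mapping.lookup x (W l))"

lemma lookup_phi: "Poly_Mapping.lookup (phi x) m = (\<Sum>l\<in>PL m. Poly_Mapping.lookup x (W l))"
proof -
  have "{m. (\<Sum>l\<in>PL m. Poly_Mapping.lookup x (W l)) \<noteq> 0} \<subseteq> (\<lambda>w. mset (wl w)) ` Poly_Mapping.keys x"
  proof
    fix m assume "m \<in> {m. (\<Sum>l\<in>PL m. Poly_Mapping.lookup x (W l)) \<noteq> 0}"
    then obtain l where "l \<in> PL m" "Poly_Mapping.lookup x (W l) \<noteq> 0"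
      by (auto elim: sum.not_neutral_contains_not_neutral)
    then show "m \<in> (\<lambda>w. mset (wl w)) ` Poly_Mapping.keys x"
      by (auto simp: PL_def lookup_not_eq_zero_eq_in_keys intro!: image_eqI[of _ _ "W l"])
  qed
  then have "finite {m. (\<Sum>l\<in>PL m. Poly_Mapping.lookup x (W l)) \<noteq> 0}"
    by (rule finite_subset) simp
  then show ?thesis unfolding phi_def by simp
qed

lemma phi_add: "phi (x + y) = phi x + phi y"
  by (rule poly_mapping_eqI) (simp add: lookup_phi lookup_add sum.distrib)

lemma phi_zero: "phi 0 = 0"
  by (rule poly_mapping_eqI) (simp add: lookup_phi)

lemma phi_diff: "phi (x - y) = phi x - phi y"
  using phi_add[of "x - y" y] by (simp add: eq_diff_eq)

lemma phi_single: "phi (Poly_Mapping.single (W l) c) = Poly_Mapping.single (mset l) c"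
proof (rule poly_mapping_eqI)
  fix m
  have "(\<Sum>l'\<in>PL m. Poly_Mapping.lookup (Poly_Mapping.single (W l) c) (W l')) = (\<Sum>l'\<in>PL m. if l' = l then c else 0)"
    by (intro sum.cong) (auto simp: lookup_single when_def)
  also have "\<dots> = (if mset l = m then c else 0)"
    using finite_PL by (simp add: PL_def)
  finally show "Poly_Mapping.lookup (phi (Poly_Mapping.single (W l) c)) m = Poly_Mapping.lookup (Poly_Mapping.single (mset l) c) m"
    by (simp add: lookup_phi lookup_single when_def)
qed

lemma phi_mult: "phi (x * y) = phi x * phi y"
proof (induct x rule: pm_induct)
  case zero then show ?case by (simp add: phi_zero)
next
  case (add x1 x2) then show ?case by (simp add: distrib_right phi_add)
next
  case (single w c)
  obtain l where w: "w = W l" by (cases w)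
  show ?case
  proof (induct y rule: pm_induct)
    case zero then show ?case by (simp add: phi_zero)
  next
    case (add y1 y2) then show ?case by (simp add: distrib_left phi_add)
  next
    case (single v d)
    obtain l' where v: "v = W l'" by (cases v)
    show ?case unfolding w v by (simp add: mult_single phi_single)
  qed
qed

abbreviation JJ :: "'k::field freealg set" where
  "JJ \<equiv> ideal_gen {u * v - v * u | u v :: 'k freealg. True}"

lemma J_phi: "j \<in> JJ \<Longrightarrow> phi j = 0"
  by (induct j rule: ideal_gen.induct) (auto simp: phi_diff phi_mult phi_add phi_zero mult.commute)

definition sigma :: "'k::field freealg \<Rightarrow> 'k freealg" where
  "sigma x = Abs_poly_mapping (\<lambda>w. if sorted (wl w) then Poly_Mapping.lookup (phi x) (mset (wl w)) else 0)"

lemma lookup_sigma: "Poly_Mapping.lookup (sigma x) w = (if sorted (wl w) then Poly_Mapping.lookup (phi x) (mset (wl w)) else 0)"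
proof -
  have "{w. (if sorted (wl w) then Poly_Mapping.lookup (phi x) (mset (wl w)) else 0) \<noteq> 0}
        \<subseteq> (\<lambda>m. W (sorted_list_of_multiset m)) ` Poly_Mapping.keys (phi x)"
  proof
    fix w assume a: "w \<in> {w. (if sorted (wl w) then Poly_Mapping.lookup (phi x) (mset (wl w)) else 0) \<noteq> 0}"
    obtain l where w: "w = W l" by (cases w)
    from a w have "sorted l" "mset l \<in> Poly_Mapping.keys (phi x)" by (auto simp: lookup_not_eq_zero_eq_in_keys split: if_splits)
    then show "w \<in> (\<lambda>m. W (sorted_list_of_multiset m)) ` Poly_Mapping.keys (phi x)"
      using w by (auto intro!: image_eqI[of _ _ "mset l"] simp: sorted_sort_id)
  qed
  then have "finite {w. (if sorted (wl w) then Poly_Mapping.lookup (phi x) (mset (wl w)) else 0) \<noteq> 0}"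
    by (rule finite_subset) simp
  then show ?thesis unfolding sigma_def by simp
qed

lemma sigma_add: "sigma (x + y) = sigma x + sigma y"
  by (rule poly_mapping_eqI) (simp add: lookup_sigma lookup_add phi_add)

lemma sigma_zero: "sigma 0 = 0"
  by (rule poly_mapping_eqI) (simp add: lookup_sigma phi_zero)

lemma sort_char: "(sorted l' \<and> mset l = mset l') = (sort l = l')"
  by (metis mset_sort properties_for_sort sorted_sort)

lemma sigma_single: "sigma (Poly_Mapping.single (W l) c) = Poly_Mapping.single (W (sort l)) c"
proof (rule poly_mapping_eqI)
  fix w
  obtain l' where w: "w = W l'" by (cases w)
  show "Poly_Mapping.lookup (sigma (Poly_Mapping.single (W l) c)) w = Poly_Mapping.lookup (Poly_Mapping.single (W (sort l)) c) w"
    unfolding w lookup_sigma phi_single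
    using sort_char[of l' l] by (auto simp: lookup_single when_def)
qed

lemma J_diff: "x \<in> JJ \<Longrightarrow> y \<in> JJ \<Longrightarrow> x - y \<in> JJ"
  by (rule ideal_diff)

lemma J_comm: "u * v - v * u \<in> JJ"
  by (rule ideal_gen.base) blast

lemma ins_J: "wd (g # s) - wd (insort g s) \<in> (JJ :: 'k::field freealg set)"
proof (induct s)
  case Nil then show ?case by (simp add: ideal_gen.zero)
next
  case (Cons h s)
  show ?case
  proof (cases "g \<le> h")
    case True then show ?thesis by (simp add: ideal_gen.zero)
  next
    case False
    have eq: "wd (g # h # s) - wd (h # insort g s) =
      (wd [g] * wd [h] - wd [h] * wd [g]) * wd s + wd [h] * (wd (g # s) - wd (insort g s) :: 'k freealg)"
      by (simp add: wd_Cons[of g "h # s"] wd_Cons[of h s] wd_Cons[of h "insort g s"] wd_Cons[of g s] algebra_simps)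
    have "wd (g # h # s) - wd (h # insort g s) \<in> (JJ :: 'k freealg set)"
      unfolding eq by (rule ideal_gen.add[OF ideal_gen.rmult[OF J_comm] ideal_gen.lmult[OF Cons]])
    then show ?thesis using False by simp
  qed
qed

lemma sort_J: "wd l - wd (sort l) \<in> (JJ :: 'k::field freealg set)"
proof (induct l)
  case Nil then show ?case by (simp add: ideal_gen.zero)
next
  case (Cons g l)
  have eq: "wd (g # l) - wd (insort g (sort l)) =
      wd [g] * (wd l - wd (sort l)) + (wd (g # sort l) - wd (insort g (sort l)) :: 'k freealg)"
    by (simp add: wd_Cons[of g l] wd_Cons[of g "sort l"] algebra_simps)
  have "wd (g # l) - wd (insort g (sort l)) \<in> (JJ :: 'k freealg set)"
    unfolding eq by (rule ideal_gen.add[OF ideal_gen.lmult[OF Cons] ins_J])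
  then show ?case by simp
qed

lemma sigma_J: "x - sigma x \<in> (JJ :: 'k::field freealg set)"
proof (induct x rule: pm_induct)
  case zero then show ?case by (simp add: sigma_zero ideal_gen.zero)
next
  case (add x y)
  have "(x + y) - sigma (x + y) = (x - sigma x) + (y - sigma y)" by (simp add: sigma_add)
  then show ?case by (simp only:) (rule ideal_gen.add[OF add])
next
  case (single w c)
  obtain l where w: "w = W l" by (cases w)
  have "Poly_Mapping.single (W l) c - sigma (Poly_Mapping.single (W l) c) = sc c * (wd l - wd (sort l) :: 'k freealg)"
    by (simp only: sigma_single) (simp add: single_wd right_diff_distrib)
  then show ?case unfolding w by (simp only:) (rule ideal_gen.lmult[OF sort_J])
qed

lemma avoid: "x \<in> subalg_gen S \<Longrightarrow> (\<forall>s\<in>S. \<forall>w\<in>Poly_Mapping.keys s. g \<notin> set (wl w)) \<Longrightarrow> \<forall>w\<in>Poly_Mapping.keys x. g \<notin> set (wl w)"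
proof (induct x rule: subalg_gen.induct)
  case (base x) then show ?case by blast
next
  case (scal c) then show ?case by (auto simp: sc_def zero_word_def split: if_splits)
next
  case (add x y) then show ?case using keys_add[of x y] by blast
next
  case (mult x y)
  have wl_plus: "wl (a + b) = wl a @ wl b" for a b by (cases a; cases b) simp
  show ?case
  proof
    fix w assume "w \<in> Poly_Mapping.keys (x * y)"
    then obtain a b where "w = a + b" "a \<in> Poly_Mapping.keys x" "b \<in> Poly_Mapping.keys y" using keys_mult[of x y] by blast
    then show "g \<notin> set (wl w)" using mult by (auto simp: wl_plus)
  qed
qed

lemma phi_avoid: "\<forall>w\<in>Poly_Mapping.keys x. g \<notin> set (wl w) \<Longrightarrow> g \<in># m \<Longrightarrow> Poly_Mapping.lookup (phi x) m = 0"
  unfolding lookup_phi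
proof (intro sum.neutral ballI)
  fix l assume a: "\<forall>w\<in>Poly_Mapping.keys x. g \<notin> set (wl w)" "g \<in># m" "l \<in> PL m"
  then have "g \<in> set l" by (auto simp: PL_def)
  then have "W l \<notin> Poly_Mapping.keys x" using a(1) by force
  then show "Poly_Mapping.lookup x (W l) = 0" by (simp add: not_in_keys_iff_lookup_eq_zero)
qed



lemma AW_J: "i \<in> AW_ideal q \<Longrightarrow> i \<in> JJ"
  unfolding AW_ideal_def
proof (induct i rule: ideal_gen.induct)
  case (base x) then show ?case by (intro ideal_gen.base) blast
next
  case zero then show ?case by (rule ideal_gen.zero)
next
  case (add x y) show ?case by (rule ideal_gen.add[OF add(2) add(4)])
next
  case (lmult x r) show ?case by (rule ideal_gen.lmult[OF lmult(2)])
next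
  case (rmult x r) show ?case by (rule ideal_gen.rmult[OF rmult(2)])
qed

lemma ab_ne:
  fixes q :: "'k::field"
  assumes q0: "q \<noteq> 0" and q4: "q ^ 4 \<noteq> 1"
  shows "q / (q^2 - inverse (q^2)) \<noteq> inverse q / (q^2 - inverse (q^2))"
proof -
  have p: "q ^ 4 = q^2 * q^2" by (simp only: power_add[symmetric]) simp
  have q2: "q^2 \<noteq> 0" using q0 by simp
  have d: "q^2 - inverse (q^2) \<noteq> 0"
  proof
    assume "q^2 - inverse (q^2) = 0"
    then have "q^2 = inverse (q^2)" by simp
    then have "q^2 * q^2 = q^2 * inverse (q^2)" by simp
    also have "\<dots> = 1" using q2 by (rule right_inverse)
    finally have h: "q^2 * q^2 = 1" .
    show False using q4 p h by metis
  qed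
  have n: "q \<noteq> inverse q"
  proof
    assume "q = inverse q"
    then have "q * q = q * inverse q" by simp
    also have "\<dots> = 1" using q0 by (rule right_inverse)
    finally have "q^2 = 1" by (simp add: power2_eq_square)
    then show False using q4 p by simp
  qed
  show ?thesis
  proof
    assume "q / (q^2 - inverse (q^2)) = inverse q / (q^2 - inverse (q^2))"
    then have "q = inverse q" using d by simp
    then show False using n by simp
  qed
qed

lemma lift_pair:
  fixes q :: "'k::field"
  assumes G: "G \<in> {awA q, awB q, awC q}" and H: "H \<in> {awA q, awB q, awC q}"
    and G_eq: "G = Z + smul a (X * Y) - smul b (Y * X)"
    and H_eq: "H = X + smul a (Y * Z) - smul b (Z * Y)"
    and ab: "a \<noteq> b"
    and gen: "\<And>x. x \<in> subalg_gen {X, Y, Z}"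
    and j: "j \<in> JJ" and i: "i \<in> AW_ideal q"
  shows "j + sc c + i \<in> lift q (subalg_gen {X, Y})"
proof -
  have "\<exists>s i'. j = s + i' \<and> s \<in> subalg_gen {X, Y} \<and> i' \<in> AW_ideal q"
    unfolding AW_ideal_def
    by (rule main_dir[OF G_eq H_eq ab _ _ gen j]; rule ideal_gen.base; use G H in blast)
  then obtain s i' where si: "j = s + i'" "s \<in> subalg_gen {X, Y}" "i' \<in> AW_ideal q" by blast
  have "j + sc c + i = (s + sc c) + (i' + i)" using si by (simp add: algebra_simps)
  moreover have "s + sc c \<in> subalg_gen {X, Y}" by (intro subalg_gen.add si subalg_gen.scal)
  moreover have "i' + i \<in> AW_ideal q" unfolding AW_ideal_def
    using si(3) i unfolding AW_ideal_def by (rule ideal_gen.add)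
  ultimately show ?thesis unfolding lift_def by blast
qed

lemma keys_gen: "Poly_Mapping.keys (genA :: 'k::field freealg) = {W [GA]}"
  "Poly_Mapping.keys (genB :: 'k::field freealg) = {W [GB]}"
  "Poly_Mapping.keys (genC :: 'k::field freealg) = {W [GC]}"
  by (simp_all add: genA_def genB_def genC_def)

lemma lift_avoid:
  assumes "x \<in> lift q (subalg_gen S)" "\<forall>s\<in>S. \<forall>w\<in>Poly_Mapping.keys s. g \<notin> set (wl w)" "g \<in># m"
  shows "Poly_Mapping.lookup (phi x) m = 0"
proof -
  obtain y i where yi: "x = y + i" "y \<in> subalg_gen S" "i \<in> AW_ideal q"
    using assms(1) unfolding lift_def by blast
  have "phi i = 0" by (rule J_phi[OF AW_J[OF yi(3)]])
  then have "phi x = phi y" using yi(1) by (simp add: phi_add)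
  then show ?thesis using phi_avoid[OF avoid[OF yi(2) assms(2)] assms(3)] by simp
qed

theorem theorem11p15:
  fixes q :: "'k::field"
  assumes "q \<noteq> 0" and "q ^ 4 \<noteq> 1"
  shows "comm_ideal_plus_scalars q =
           lift q (subalg_gen {genA, genB}) \<inter> lift q (subalg_gen {genB, genC})
             \<inter> lift q (subalg_gen {genA, genC})"
proof (rule set_eqI, rule iffI)
  define a where "a = q / (q^2 - inverse (q^2))"
  define b where "b = inverse q / (q^2 - inverse (q^2))"
  have ab: "a \<noteq> b" unfolding a_def b_def by (rule ab_ne[OF assms])
  have eA: "awA q = genA + smul a (genB * genC) - smul b (genC * genB)"
    by (simp add: awA_def smul_def mult.assoc a_def b_def)
  have eB: "awB q = genB + smul a (genC * genA) - smul b (genA * genC)"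
    by (simp add: awB_def smul_def mult.assoc a_def b_def)
  have eC: "awC q = genC + smul a (genA * genB) - smul b (genB * genA)"
    by (simp add: awC_def smul_def mult.assoc a_def b_def)
  have g1: "\<And>x. (x :: 'k freealg) \<in> subalg_gen {genA, genB, genC}" by (rule all_gen)
  have e2: "{genB, genC, genA} = {genA, genB, genC :: 'k freealg}" by blast
  have e3: "{genC, genA, genB} = {genA, genB, genC :: 'k freealg}" by blast
  have e4: "{genC, genA} = {genA, genC :: 'k freealg}" by blast
  have g2: "\<And>x. (x :: 'k freealg) \<in> subalg_gen {genB, genC, genA}" unfolding e2 by (rule all_gen)
  have g3: "\<And>x. (x :: 'k freealg) \<in> subalg_gen {genC, genA, genB}" unfolding e3 by (rule all_gen)
  fix x
  {
    assume "x \<in> comm_ideal_plus_scalars q"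
    then obtain j c i where x: "x = j + sc c + i" "j \<in> JJ" "i \<in> AW_ideal q"
      unfolding comm_ideal_plus_scalars_def lift_def by blast
    have 1: "x \<in> lift q (subalg_gen {genA, genB})"
      unfolding x(1) by (rule lift_pair[OF _ _ eC eA ab g1 x(2,3)]) simp_all
    have 2: "x \<in> lift q (subalg_gen {genB, genC})"
      unfolding x(1) by (rule lift_pair[OF _ _ eA eB ab g2 x(2,3)]) simp_all
    have "x \<in> lift q (subalg_gen {genC, genA})"
      unfolding x(1) by (rule lift_pair[OF _ _ eB eC ab g3 x(2,3)]) simp_all
    then have 3: "x \<in> lift q (subalg_gen {genA, genC})" by (simp only: e4)
    show "x \<in> lift q (subalg_gen {genA, genB}) \<inter> lift q (subalg_gen {genB, genC})
             \<inter> lift q (subalg_gen {genA, genC})" using 1 2 3 by blast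
  }
  {
    assume x: "x \<in> lift q (subalg_gen {genA, genB}) \<inter> lift q (subalg_gen {genB, genC})
             \<inter> lift q (subalg_gen {genA, genC})"
    have z: "Poly_Mapping.lookup (phi x) m = 0" if "m \<noteq> {#}" for m
    proof -
      from that have "set_mset m \<noteq> {}" by simp
      then obtain g where g: "g \<in># m" by blast
      show ?thesis
      proof (cases g)
        case GA then show ?thesis using x g
          by (intro lift_avoid[of x q "{genB, genC}" GA]) (auto simp: keys_gen)
      next
        case GB then show ?thesis using x g
          by (intro lift_avoid[of x q "{genA, genC}" GB]) (auto simp: keys_gen)
      next
        case GC then show ?thesis using x g
          by (intro lift_avoid[of x q "{genA, genB}" GC]) (auto simp: keys_gen)
      qed
    qed
    define c where "c = Poly_Mapping.lookup (phi x) {#}"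
    have s: "sigma x = sc c"
    proof (rule poly_mapping_eqI)
      fix w
      obtain l where w: "w = W l" by (cases w)
      show "Poly_Mapping.lookup (sigma x) w = Poly_Mapping.lookup (sc c) w"
      proof (cases "l = []")
        case True then show ?thesis
          by (simp add: w lookup_sigma sc_def c_def zero_word_def)
      next
        case False
        then have "mset l \<noteq> {#}" by simp
        then show ?thesis using False
          by (simp add: w lookup_sigma sc_def z lookup_single zero_word_def when_def)
      qed
    qed
    have xeq: "x = ((x - sigma x) + sc c) + 0" using s by simp
    have m: "(x - sigma x) + sc c \<in> {j + sc c |j c. j \<in> JJ}" using sigma_J[of x] by blast
    have z0: "(0 :: 'k freealg) \<in> AW_ideal q" unfolding AW_ideal_def by (rule ideal_gen.zero)
    show "x \<in> comm_ideal_plus_scalars q"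
      unfolding comm_ideal_plus_scalars_def lift_def
      apply (rule CollectI)
      apply (rule exI[of _ "(x - sigma x) + sc c"])
      apply (rule exI[of _ 0])
      using xeq m z0 by simp
  }
qed


end
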